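(* Let $m,n \ge 1$ be integers with $\gcd(m,n) > 1$ and such that $(m,n) \neq (2,2)$ (i.e., at least one of $m,n$ is different from $2$). Then the tensor product $K_m \otimes K_n$ is not a circulant graph.
   Context: Graphs have no multiple edges but may have loops. The tensor product $G \otimes H$ of graphs $G$ and $H$ has vertex set $V(G)\times V(H)$, with $(g,h)$ adjacent to $(g',h')$ if and only if $g$ is adjacent to $g'$ in $G$ and $h$ is adjacent to $h'$ in $H$. For an integer $n\ge 1$ and a set $S$ of integers, the circulant graph $C_nS$ has vertex set $\{0,1,\dots,n-1\}$, with $i$ adjacent to $j$ if and only if $i-j \equiv \pm s \pmod n$ for some $s\in S$. A graph is circulant if it is isomorphic to some $C_nS$; equivalently, if its automorphism group contains a cyclic subgroup acting transitively on the vertices. $K_n$ denotes the complete graph on $n$ vertices (no loops). *)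

theory Defs
  imports Main
begin

text \<open>A graph (possibly with loops, no multiple edges) is represented by a vertex set
  together with a symmetric adjacency relation on it.\<close>

record 'a graph =
  verts :: "'a set"
  adj :: "'a \<Rightarrow> 'a \<Rightarrow> bool"

definition complete_graph :: "nat \<Rightarrow> nat graph" where
  "complete_graph n = \<lparr> verts = {0..<n}, adj = (\<lambda>i j. i \<in> {0..<n} \<and> j \<in> {0..<n} \<and> i \<noteq> j) \<rparr>"

definition tensor_product :: "'a graph \<Rightarrow> 'b graph \<Rightarrow> ('a \<times> 'b) graph" where
  "tensor_product G H = \<lparr> verts = verts G \<times> verts H,
     adj = (\<lambda>(g, h) (g', h'). (g, h) \<in> verts G \<times> verts H \<and> (g', h') \<in> verts G \<times> verts H
              \<and> adj G g g' \<and> adj H h h') \<rparr>"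

definition circulant_graph :: "nat \<Rightarrow> int set \<Rightarrow> nat graph" where
  "circulant_graph n S = \<lparr> verts = {0..<n},
     adj = (\<lambda>i j. i \<in> {0..<n} \<and> j \<in> {0..<n} \<and>
              (\<exists>s\<in>S. (int i - int j) mod int n = s mod int n
                    \<or> (int i - int j) mod int n = (- s) mod int n)) \<rparr>"

definition graph_iso :: "'a graph \<Rightarrow> 'b graph \<Rightarrow> bool" where
  "graph_iso G H \<longleftrightarrow> (\<exists>f. bij_betw f (verts G) (verts H) \<and>
     (\<forall>x\<in>verts G. \<forall>y\<in>verts G. adj G x y \<longleftrightarrow> adj H (f x) (f y)))"

definition is_circulant :: "'a graph \<Rightarrow> bool" where
  "is_circulant G \<longleftrightarrow> (\<exists>n S. n \<ge> 1 \<and> graph_iso G (circulant_graph n S))"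

end

theory Submission
  imports Defs
begin

definition adjT :: "nat \<times> nat \<Rightarrow> nat \<times> nat \<Rightarrow> bool" where
  "adjT x y \<longleftrightarrow> fst x \<noteq> fst y \<and> snd x \<noteq> snd y"

lemma pigeon_aux:
  fixes F :: "nat \<Rightarrow> 'b" and G :: "nat \<Rightarrow> 'b"
  assumes "\<And>k. \<exists>i<M. F k = G i"
  shows "\<exists>a b. a < b \<and> b \<le> M \<and> F a = F b"
proof -
  have "F ` {0..M} \<subseteq> G ` {0..<M}" using assms by fastforce
  hence "card (F ` {0..M}) \<le> card (G ` {0..<M})" by (simp add: card_mono)
  also have "\<dots> \<le> M" using card_image_le[of "{0..<M}" G] by simp
  finally have "card (F ` {0..M}) < card {0..M}" by simp
  hence "\<not> inj_on F {0..M}" by (rule pigeonhole)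
  then obtain a b where ab: "a \<in> {0..M}" "b \<in> {0..M}" "a \<noteq> b" "F a = F b"
    unfolding inj_on_def by blast
  show ?thesis
  proof (cases "a < b")
    case True thus ?thesis using ab by auto
  next
    case False thus ?thesis using ab by (intro exI[of _ b] exI[of _ a]) auto
  qed
qed

locale rook =
  fixes m n :: nat
  assumes m2: "m \<ge> 2" and n2: "n \<ge> 2"
begin

definition V where "V = {0..<m} \<times> {0..<n}"
definition row where "row i = {i} \<times> {0..<n}"
definition col where "col j = {0..<m} \<times> {j}"
definition lines where "lines = row ` {0..<m} \<union> col ` {0..<n}"
definition aut where "aut \<phi> \<longleftrightarrow> inj_on \<phi> V \<and> \<phi> ` V = V \<and>
   (\<forall>x\<in>V. \<forall>y\<in>V. adjT (\<phi> x) (\<phi> y) = adjT x y)"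

lemma lines_sub: "L \<in> lines \<Longrightarrow> L \<subseteq> V"
  unfolding lines_def row_def col_def V_def by auto

lemma line_clique: "L \<in> lines \<Longrightarrow> x \<in> L \<Longrightarrow> y \<in> L \<Longrightarrow> \<not> adjT x y"
  unfolding lines_def row_def col_def adjT_def by auto

lemma clique:
  assumes "K \<subseteq> V" "\<forall>x\<in>K. \<forall>y\<in>K. \<not> adjT x y"
  shows "\<exists>L\<in>lines. K \<subseteq> L"
proof (cases "K = {}")
  case True
  have "row 0 \<in> lines" using m2 unfolding lines_def by auto
  thus ?thesis using True by blast
next
  case False
  then obtain x0 where x0: "x0 \<in> K" by blast
  show ?thesis
  proof (cases "\<forall>y\<in>K. fst y = fst x0")
    case True
    have "fst x0 < m" using x0 assms(1) unfolding V_def by auto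
    hence "row (fst x0) \<in> lines" unfolding lines_def by auto
    moreover have "K \<subseteq> row (fst x0)" using True assms(1) unfolding row_def V_def
      by (auto simp: mem_Times_iff)
    ultimately show ?thesis by blast
  next
    case False
    then obtain y where y: "y \<in> K" "fst y \<noteq> fst x0" by blast
    hence sy: "snd y = snd x0" using assms(2) x0 unfolding adjT_def by blast
    have "K \<subseteq> col (snd x0)"
    proof
      fix z assume z: "z \<in> K"
      have "snd z = snd x0"
      proof (rule ccontr)
        assume h: "snd z \<noteq> snd x0"
        hence "fst z = fst x0" using assms(2) x0 z unfolding adjT_def by blast
        hence "adjT z y" using h sy y unfolding adjT_def by auto
        thus False using assms(2) z y by blast
      qed
      thus "z \<in> col (snd x0)" using z assms(1) unfolding col_def V_def
        by (auto simp: mem_Times_iff)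
    qed
    moreover have "snd x0 < n" using x0 assms(1) unfolding V_def by auto
    hence "col (snd x0) \<in> lines" unfolding lines_def by auto
    ultimately show ?thesis by blast
  qed
qed

lemma outside:
  assumes "L \<in> lines" "x \<in> V" "\<forall>y\<in>L. \<not> adjT x y"
  shows "x \<in> L"
proof -
  { fix i assume i: "i < m" "L = row i"
    have ?thesis
    proof (cases "fst x = i")
      case True thus ?thesis using assms(2) i unfolding V_def row_def by (auto simp: mem_Times_iff)
    next
      case False
      have "(i,0) \<in> L" "(i,1) \<in> L" using i n2 unfolding row_def by auto
      hence "snd x = 0" "snd x = 1" using assms(3) False unfolding adjT_def by force+
      thus ?thesis by simp
    qed }
  moreover
  { fix j assume j: "j < n" "L = col j"
    have ?thesis
    proof (cases "snd x = j")
      case True thus ?thesis using assms(2) j unfolding V_def col_def by (auto simp: mem_Times_iff)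
    next
      case False
      have "(0,j) \<in> L" "(1,j) \<in> L" using j m2 unfolding col_def by auto
      hence "fst x = 0" "fst x = 1" using assms(3) False unfolding adjT_def by force+
      thus ?thesis by simp
    qed }
  ultimately show ?thesis using assms(1) unfolding lines_def by auto
qed

lemma line_image:
  assumes a: "aut \<phi>" and L: "L \<in> lines"
  shows "\<phi> ` L \<in> lines"
proof -
  have LV: "L \<subseteq> V" using lines_sub L .
  have inj: "inj_on \<phi> V" and im: "\<phi> ` V = V" and pres: "\<And>x y. x \<in> V \<Longrightarrow> y \<in> V \<Longrightarrow> adjT (\<phi> x) (\<phi> y) = adjT x y"
    using a unfolding aut_def by simp_all
  have "\<phi> ` L \<subseteq> \<phi> ` V" using LV by (rule image_mono)
  hence "\<phi> ` L \<subseteq> V" by (simp only: im)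
  moreover have "\<forall>x\<in>\<phi> ` L. \<forall>y\<in>\<phi> ` L. \<not> adjT x y"
  proof (intro ballI)
    fix x y assume "x \<in> \<phi> ` L" "y \<in> \<phi> ` L"
    then obtain x' y' where "x' \<in> L" "y' \<in> L" "x = \<phi> x'" "y = \<phi> y'" by blast
    note h = this
    have "x' \<in> V" "y' \<in> V" using h LV by blast+
    moreover have "\<not> adjT x' y'" using line_clique[OF L h(1) h(2)] .
    ultimately show "\<not> adjT x y" using pres[of x' y'] h by simp
  qed
  ultimately have "\<exists>L'\<in>lines. \<phi> ` L \<subseteq> L'" by (rule clique)
  then obtain L' where L': "L' \<in> lines" "\<phi> ` L \<subseteq> L'" by blast
  have "L' \<subseteq> \<phi> ` L"
  proof
    fix y assume y: "y \<in> L'"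
    hence "y \<in> V" using lines_sub[OF L'(1)] by blast
    hence "y \<in> \<phi> ` V" by (simp only: im)
    then obtain x where x: "x \<in> V" "y = \<phi> x" by blast
    have "\<forall>z\<in>L. \<not> adjT x z"
    proof
      fix z assume z: "z \<in> L"
      have "\<phi> z \<in> L'" using z L'(2) by blast
      hence "\<not> adjT (\<phi> x) (\<phi> z)" using line_clique[OF L'(1)] y x(2) by blast
      moreover have "z \<in> V" using z LV by blast
      ultimately show "\<not> adjT x z" using pres[of x z] x by simp
    qed
    hence "x \<in> L" using outside[OF L x(1)] by blast
    thus "y \<in> \<phi> ` L" using x by blast
  qed
  hence "\<phi> ` L = L'" using L'(2) by (rule subset_antisym[rotated])
  thus ?thesis using L'(1) by simp
qed

lemma row_ne_col: "row i \<noteq> col j"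
proof
  assume h: "row i = col j"
  show False
  proof (cases "j < n")
    case True
    have "(0,j) \<in> col j" "(1,j) \<in> col j" using m2 True unfolding col_def by auto
    hence "(0,j) \<in> row i" "(1,j) \<in> row i" using h by simp_all
    thus False unfolding row_def by simp
  next
    case False
    have "(0,j) \<in> col j" using m2 unfolding col_def by auto
    hence "(0,j) \<in> row i" using h by simp
    thus False using False unfolding row_def by simp
  qed
qed

lemma row_inter: "i \<noteq> i' \<Longrightarrow> row i \<inter> row i' = {}"
  unfolding row_def by auto
lemma col_inter: "j \<noteq> j' \<Longrightarrow> col j \<inter> col j' = {}"
  unfolding col_def by auto
lemma row_col: "i < m \<Longrightarrow> j < n \<Longrightarrow> row i \<inter> col j = {(i,j)}"
  unfolding row_def col_def by auto
lemma rowV: "i < m \<Longrightarrow> row i \<subseteq> V" unfolding row_def V_def by auto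
lemma colV: "j < n \<Longrightarrow> col j \<subseteq> V" unfolding col_def V_def by auto


lemma line_cases: "L \<in> lines \<Longrightarrow> (\<exists>i<m. L = row i) \<or> (\<exists>j<n. L = col j)"
  unfolding lines_def by auto

lemma img_int: "aut \<phi> \<Longrightarrow> A \<subseteq> V \<Longrightarrow> B \<subseteq> V \<Longrightarrow> \<phi> ` A \<inter> \<phi> ` B = \<phi> ` (A \<inter> B)"
  unfolding aut_def by (metis inj_on_image_Int)

lemma img_eq: "aut \<phi> \<Longrightarrow> A \<subseteq> V \<Longrightarrow> B \<subseteq> V \<Longrightarrow> \<phi> ` A = \<phi> ` B \<Longrightarrow> A = B"
  unfolding aut_def by (metis inj_on_image_eq_iff)

lemma row_line: "i < m \<Longrightarrow> row i \<in> lines" unfolding lines_def by auto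
lemma col_line: "j < n \<Longrightarrow> col j \<in> lines" unfolding lines_def by auto

definition P where "P \<phi> \<longleftrightarrow> (\<forall>i<m. \<exists>i'<m. \<phi> ` row i = row i') \<and> (\<forall>j<n. \<exists>j'<n. \<phi> ` col j = col j')"
definition S where "S \<phi> \<longleftrightarrow> (\<forall>i<m. \<exists>j'<n. \<phi> ` row i = col j') \<and> (\<forall>j<n. \<exists>i'<m. \<phi> ` col j = row i')"

lemma aut_type:
  assumes a: "aut \<phi>"
  shows "P \<phi> \<or> S \<phi>"
proof -
  have m0: "0 < m" using m2 by simp
  have n0: "0 < n" using n2 by simp
  have "\<phi> ` row 0 \<in> lines" using line_image[OF a row_line[OF m0]] .
  from line_cases[OF this] show ?thesis
  proof
    assume "\<exists>i<m. \<phi> ` row 0 = row i"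
    then obtain i0 where i0: "i0 < m" "\<phi> ` row 0 = row i0" by blast
    have "\<forall>i<m. \<exists>i'<m. \<phi> ` row i = row i'"
    proof (intro allI impI)
      fix i assume i: "i < m"
      from line_cases[OF line_image[OF a row_line[OF i]]]
      show "\<exists>i'<m. \<phi> ` row i = row i'"
      proof
        assume "\<exists>j<n. \<phi> ` row i = col j"
        then obtain j where j: "j < n" "\<phi> ` row i = col j" by blast
        show ?thesis
        proof (cases "i = 0")
          case True thus ?thesis using i0(2) j(2) row_ne_col[of i0 j] by simp
        next
          case False
          have "\<phi> ` row i \<inter> \<phi> ` row 0 = \<phi> ` (row i \<inter> row 0)"
            using img_int[OF a rowV[OF i] rowV[OF m0]] .
          also have "\<dots> = {}" using row_inter[OF False] by simp
          finally have "col j \<inter> row i0 = {}" using j i0 by simp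
          thus ?thesis using row_col[OF i0(1) j(1)] by (simp add: Int_commute)
        qed
      qed
    qed
    moreover have "\<forall>j<n. \<exists>j'<n. \<phi> ` col j = col j'"
    proof (intro allI impI)
      fix j assume j: "j < n"
      from line_cases[OF line_image[OF a col_line[OF j]]]
      show "\<exists>j'<n. \<phi> ` col j = col j'"
      proof
        assume "\<exists>i<m. \<phi> ` col j = row i"
        then obtain i where i: "i < m" "\<phi> ` col j = row i" by blast
        have "\<phi> ` col j \<inter> \<phi> ` row 0 = \<phi> ` (col j \<inter> row 0)"
          using img_int[OF a colV[OF j] rowV[OF m0]] .
        also have "\<dots> = {\<phi> (0,j)}" using row_col[OF m0 j] by (simp add: Int_commute)
        finally have "row i \<inter> row i0 \<noteq> {}" using i i0 by simp
        hence "i = i0" using row_inter[of i i0] by blast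
        hence "\<phi> ` col j = \<phi> ` row 0" using i i0 by simp
        hence "col j = row 0" using img_eq[OF a colV[OF j] rowV[OF m0]] by simp
        thus ?thesis using row_ne_col[of 0 j] by simp
      qed
    qed
    ultimately show ?thesis unfolding P_def by blast
  next
    assume "\<exists>j<n. \<phi> ` row 0 = col j"
    then obtain j0 where j0: "j0 < n" "\<phi> ` row 0 = col j0" by blast
    have "\<forall>i<m. \<exists>j'<n. \<phi> ` row i = col j'"
    proof (intro allI impI)
      fix i assume i: "i < m"
      from line_cases[OF line_image[OF a row_line[OF i]]]
      show "\<exists>j'<n. \<phi> ` row i = col j'"
      proof
        assume "\<exists>i'<m. \<phi> ` row i = row i'"
        then obtain i' where i': "i' < m" "\<phi> ` row i = row i'" by blast
        show ?thesis
        proof (cases "i = 0")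
          case True thus ?thesis using j0(2) i'(2) row_ne_col[of i' j0] by simp
        next
          case False
          have "\<phi> ` row i \<inter> \<phi> ` row 0 = \<phi> ` (row i \<inter> row 0)"
            using img_int[OF a rowV[OF i] rowV[OF m0]] .
          also have "\<dots> = {}" using row_inter[OF False] by simp
          finally have "row i' \<inter> col j0 = {}" using j0 i' by simp
          thus ?thesis using row_col[OF i'(1) j0(1)] by simp
        qed
      qed
    qed
    moreover have "\<forall>j<n. \<exists>i'<m. \<phi> ` col j = row i'"
    proof (intro allI impI)
      fix j assume j: "j < n"
      from line_cases[OF line_image[OF a col_line[OF j]]]
      show "\<exists>i'<m. \<phi> ` col j = row i'"
      proof (rule disjE)
        assume "\<exists>i<m. \<phi> ` col j = row i" thus ?thesis .
      next
        assume "\<exists>j'<n. \<phi> ` col j = col j'"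
        then obtain j' where j': "j' < n" "\<phi> ` col j = col j'" by blast
        have "\<phi> ` col j \<inter> \<phi> ` row 0 = \<phi> ` (col j \<inter> row 0)"
          using img_int[OF a colV[OF j] rowV[OF m0]] .
        also have "\<dots> = {\<phi> (0,j)}" using row_col[OF m0 j] by (simp add: Int_commute)
        finally have "col j' \<inter> col j0 \<noteq> {}" using j' j0 by simp
        hence "j' = j0" using col_inter[of j' j0] by blast
        hence "\<phi> ` col j = \<phi> ` row 0" using j' j0 by simp
        hence "col j = row 0" using img_eq[OF a colV[OF j] rowV[OF m0]] by simp
        thus ?thesis using row_ne_col[of 0 j] by simp
      qed
    qed
    ultimately show ?thesis unfolding S_def by blast
  qed
qed

end

locale circ = rook +
  fixes \<tau> :: "nat \<Rightarrow> nat \<times> nat \<Rightarrow> nat \<times> nat" and N :: nat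
  assumes autt: "\<And>k. aut (\<tau> k)"
    and addt: "\<And>a b x. x \<in> V \<Longrightarrow> \<tau> (a + b) x = \<tau> a (\<tau> b x)"
    and zerot: "\<And>x. x \<in> V \<Longrightarrow> \<tau> 0 x = x"
    and fixt: "\<And>k x. x \<in> V \<Longrightarrow> \<tau> k x = x \<Longrightarrow> N dvd k"
    and Nmn: "N = m * n"
begin

lemma imgV: "A \<subseteq> V \<Longrightarrow> \<tau> k ` A \<subseteq> V"
proof -
  assume A: "A \<subseteq> V"
  have "\<tau> k ` A \<subseteq> \<tau> k ` V" using A by (rule image_mono)
  also have "\<dots> = V" using autt[of k] unfolding aut_def by simp
  finally show ?thesis .
qed

lemma imgadd: "A \<subseteq> V \<Longrightarrow> \<tau> (a + b) ` A = \<tau> a ` (\<tau> b ` A)"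
proof -
  assume A: "A \<subseteq> V"
  have "\<tau> (a + b) ` A = (\<lambda>x. \<tau> a (\<tau> b x)) ` A"
    by (rule image_cong[OF refl]) (use A addt in blast)
  thus ?thesis by (simp add: image_image)
qed

lemma imgzero: "A \<subseteq> V \<Longrightarrow> \<tau> 0 ` A = A"
proof -
  assume A: "A \<subseteq> V"
  have "\<tau> 0 ` A = id ` A"
    by (rule image_cong[OF refl]) (use A zerot in auto)
  thus ?thesis by simp
qed

lemma iter: "A \<subseteq> V \<Longrightarrow> \<tau> e ` A = A \<Longrightarrow> \<tau> (e * q) ` A = A"
proof (induction q)
  case 0 thus ?case using imgzero by simp
next
  case (Suc q)
  have "\<tau> (e * Suc q) ` A = \<tau> (e + e * q) ` A" by simp
  also have "\<dots> = \<tau> e ` (\<tau> (e * q) ` A)" using imgadd[OF Suc.prems(1)] .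
  also have "\<dots> = A" using Suc by simp
  finally show ?case .
qed

lemma return:
  fixes X :: "nat \<Rightarrow> (nat \<times> nat) set"
  assumes XV: "\<And>i. i < M \<Longrightarrow> X i \<subseteq> V" and M: "0 < M"
    and pres: "\<And>i. i < M \<Longrightarrow> \<exists>i'<M. \<tau> e ` X i = X i'"
  shows "\<exists>r i. 1 \<le> r \<and> r \<le> M \<and> i < M \<and> \<tau> (e * r) ` X i = X i"
proof -
  have orb: "\<exists>i<M. \<tau> (e * k) ` X 0 = X i" for k
  proof (induction k)
    case 0 thus ?case using imgzero[OF XV[OF M]] M by auto
  next
    case (Suc k)
    then obtain i where i: "i < M" "\<tau> (e * k) ` X 0 = X i" by blast
    have "\<tau> (e * Suc k) ` X 0 = \<tau> (e + e * k) ` X 0" by simp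
    also have "\<dots> = \<tau> e ` (\<tau> (e * k) ` X 0)" using imgadd[OF XV[OF M]] .
    also have "\<dots> = \<tau> e ` X i" using i by simp
    finally show ?case using pres[OF i(1)] by auto
  qed
  obtain a b where ab: "a < b" "b \<le> M" "\<tau> (e * a) ` X 0 = \<tau> (e * b) ` X 0"
    using pigeon_aux[of M "\<lambda>k. \<tau> (e * k) ` X 0" X, OF orb] by blast
  obtain i where i: "i < M" "\<tau> (e * a) ` X 0 = X i" using orb by blast
  have "\<tau> (e * (b - a)) ` X i = \<tau> (e * (b - a)) ` (\<tau> (e * a) ` X 0)" using i by simp
  also have "\<dots> = \<tau> (e * (b - a) + e * a) ` X 0" using imgadd[OF XV[OF M]] by simp
  also have "e * (b - a) + e * a = e * (b - a + a)" by (simp only: add_mult_distrib2)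
  also have "b - a + a = b" using ab(1) by simp
  finally have "\<tau> (e * (b - a)) ` X i = X i" using ab(3) i(2) by simp
  thus ?thesis using ab i by (intro exI[of _ "b - a"] exI[of _ i]) auto
qed

lemma fixed_pt:
  assumes i: "i < m" and j: "j < n" and R: "\<tau> k ` row i = row i" and C: "\<tau> k ` col j = col j"
  shows "N dvd k"
proof -
  have p: "(i,j) \<in> row i" "(i,j) \<in> col j" using row_col[OF i j] by auto
  have "\<tau> k (i,j) \<in> row i \<inter> col j" using p R C by blast
  hence "\<tau> k (i,j) = (i,j)" using row_col[OF i j] by simp
  moreover have "(i,j) \<in> V" using i j unfolding V_def by simp
  ultimately show ?thesis using fixt by blast
qed


lemma arith_aux:
  fixes r s :: nat
  assumes "1 \<le> r" "r \<le> m" "1 \<le> s" "s \<le> n" "m * n \<le> lcm r s"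
  shows "gcd m n = 1"
proof -
  have rs: "r * s = gcd r s * lcm r s" by (rule prod_gcd_lcm_nat)
  have g1: "1 \<le> gcd r s" using assms(1) by (simp add: Suc_le_eq)
  have "1 * lcm r s \<le> gcd r s * lcm r s" by (rule mult_le_mono1[OF g1])
  hence l1: "lcm r s \<le> r * s" by (simp only: rs mult_1)
  have a1: "r * s \<le> r * n" by (rule mult_le_mono2[OF assms(4)])
  have a2: "r * n \<le> m * n" by (rule mult_le_mono1[OF assms(2)])
  have eq: "r * s = m * n" using l1 a1 a2 assms(5) by linarith
  have n0: "0 < n" using assms(3,4) by linarith
  have rm: "r = m"
  proof (rule ccontr)
    assume "r \<noteq> m" hence "r < m" using assms(2) by linarith
    hence "r * n < m * n" using n0 by (rule mult_less_mono1)
    thus False using eq a1 by linarith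
  qed
  have m0: "0 < m" using assms(1,2) by linarith
  have "m * s = m * n" using eq rm by simp
  hence sn: "s = n" using m0 by simp
  have "lcm r s = m * n" using eq l1 assms(5) by linarith
  hence "lcm m n = m * n" using rm sn by simp
  hence L: "lcm m n = m * n" .
  have "m * n = gcd m n * lcm m n" by (rule prod_gcd_lcm_nat)
  also have "\<dots> = gcd m n * (m * n)" by (simp only: L)
  finally have "m * n = gcd m n * (m * n)" .
  moreover have "m * n \<noteq> 0" using m0 n0 by simp
  ultimately show ?thesis by simp
qed

lemma contra:
  assumes g: "gcd m n > 1" and n22: "\<not> (m = 2 \<and> n = 2)"
  shows False
proof -
  have m0: "0 < m" and n0: "0 < n" using m2 n2 by auto
  from aut_type[OF autt[of 1]] show False
  proof
    assume P1: "P (\<tau> 1)"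
    have Pr: "\<And>i. i < m \<Longrightarrow> \<exists>i'<m. \<tau> 1 ` row i = row i'" using P1 unfolding P_def by blast
    have Pc: "\<And>j. j < n \<Longrightarrow> \<exists>j'<n. \<tau> 1 ` col j = col j'" using P1 unfolding P_def by blast
    obtain r i where ri: "1 \<le> r" "r \<le> m" "i < m" "\<tau> (1 * r) ` row i = row i"
      using return[of m row 1, OF rowV m0 Pr] by blast
    obtain s j where sj: "1 \<le> s" "s \<le> n" "j < n" "\<tau> (1 * s) ` col j = col j"
      using return[of n col 1, OF colV n0 Pc] by blast
    obtain q1 where q1: "lcm r s = r * q1" using dvd_lcm1[of r s] unfolding dvd_def by blast
    obtain q2 where q2: "lcm r s = s * q2" using dvd_lcm2[of s r] unfolding dvd_def by blast
    have "\<tau> (r * q1) ` row i = row i" using iter[OF rowV[OF ri(3)], of r q1] ri(4) by simp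
    hence R: "\<tau> (lcm r s) ` row i = row i" using q1 by simp
    have "\<tau> (s * q2) ` col j = col j" using iter[OF colV[OF sj(3)], of s q2] sj(4) by simp
    hence C: "\<tau> (lcm r s) ` col j = col j" using q2 by simp
    have "N dvd lcm r s" using fixed_pt[OF ri(3) sj(3) R C] .
    moreover have "lcm r s > 0" using ri sj by (simp add: lcm_pos_nat)
    ultimately have "N \<le> lcm r s" by (rule dvd_imp_le)
    hence "m * n \<le> lcm r s" using Nmn by simp
    hence "gcd m n = 1" using arith_aux[OF ri(1) ri(2) sj(1) sj(2)] by simp
    thus False using g by simp
  next
    assume S1: "S (\<tau> 1)"
    have P2: "P (\<tau> 2)"
      unfolding P_def
    proof (intro conjI allI impI)
      fix i assume i: "i < m"
      obtain j where j: "j < n" "\<tau> 1 ` row i = col j" using S1 i unfolding S_def by blast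
      obtain i' where i': "i' < m" "\<tau> 1 ` col j = row i'" using S1 j(1) unfolding S_def by blast
      have "\<tau> 2 ` row i = \<tau> (1 + 1) ` row i" by (simp only: one_add_one)
      also have "\<dots> = \<tau> 1 ` (\<tau> 1 ` row i)" using imgadd[OF rowV[OF i]] .
      also have "\<dots> = row i'" using j(2) i'(2) by simp
      finally show "\<exists>i'<m. \<tau> 2 ` row i = row i'" using i'(1) by blast
    next
      fix j assume j: "j < n"
      obtain i where i: "i < m" "\<tau> 1 ` col j = row i" using S1 j unfolding S_def by blast
      obtain j' where j': "j' < n" "\<tau> 1 ` row i = col j'" using S1 i(1) unfolding S_def by blast
      have "\<tau> 2 ` col j = \<tau> (1 + 1) ` col j" by (simp only: one_add_one)
      also have "\<dots> = \<tau> 1 ` (\<tau> 1 ` col j)" using imgadd[OF colV[OF j]] .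
      also have "\<dots> = col j'" using i(2) j'(2) by simp
      finally show "\<exists>j'<n. \<tau> 2 ` col j = col j'" using j'(1) by blast
    qed
    have Pr: "\<And>i. i < m \<Longrightarrow> \<exists>i'<m. \<tau> 2 ` row i = row i'" using P2 unfolding P_def by blast
    have Pc: "\<And>j. j < n \<Longrightarrow> \<exists>j'<n. \<tau> 2 ` col j = col j'" using P2 unfolding P_def by blast
    obtain r i where ri: "1 \<le> r" "r \<le> m" "i < m" "\<tau> (2 * r) ` row i = row i"
      using return[of m row 2, OF rowV m0 Pr] by blast
    obtain j where j: "j < n" "\<tau> 1 ` row i = col j" using S1 ri(3) unfolding S_def by blast
    have "\<tau> (2 * r) ` col j = \<tau> (2 * r) ` (\<tau> 1 ` row i)" using j by simp
    also have "\<dots> = \<tau> (2 * r + 1) ` row i" using imgadd[OF rowV[OF ri(3)], of "2 * r" 1] by (rule sym)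
    also have "\<dots> = \<tau> (1 + 2 * r) ` row i" by (simp add: add.commute)
    also have "\<dots> = \<tau> 1 ` (\<tau> (2 * r) ` row i)" using imgadd[OF rowV[OF ri(3)]] .
    also have "\<dots> = col j" using ri(4) j(2) by simp
    finally have C: "\<tau> (2 * r) ` col j = col j" .
    have "N dvd 2 * r" using fixed_pt[OF ri(3) j(1) ri(4) C] .
    hence "N \<le> 2 * r" using ri(1) by (intro dvd_imp_le) simp_all
    hence "m * n \<le> 2 * r" using Nmn by simp
    hence "m * n \<le> m * 2" using ri(2) by linarith
    hence n2': "n \<le> 2" using m0 by simp
    obtain s j' where sj: "1 \<le> s" "s \<le> n" "j' < n" "\<tau> (2 * s) ` col j' = col j'"
      using return[of n col 2, OF colV n0 Pc] by blast
    obtain i' where i': "i' < m" "\<tau> 1 ` col j' = row i'" using S1 sj(3) unfolding S_def by blast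
    have "\<tau> (2 * s) ` row i' = \<tau> (2 * s) ` (\<tau> 1 ` col j')" using i' by simp
    also have "\<dots> = \<tau> (2 * s + 1) ` col j'" using imgadd[OF colV[OF sj(3)], of "2 * s" 1] by (rule sym)
    also have "\<dots> = \<tau> (1 + 2 * s) ` col j'" by (simp add: add.commute)
    also have "\<dots> = \<tau> 1 ` (\<tau> (2 * s) ` col j')" using imgadd[OF colV[OF sj(3)]] .
    also have "\<dots> = row i'" using sj(4) i'(2) by simp
    finally have R: "\<tau> (2 * s) ` row i' = row i'" .
    have "N dvd 2 * s" using fixed_pt[OF i'(1) sj(3) R sj(4)] .
    hence "N \<le> 2 * s" using sj(1) by (intro dvd_imp_le) simp_all
    hence "m * n \<le> 2 * s" using Nmn by simp
    hence "m * n \<le> 2 * n" using sj(2) by linarith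
    hence "m \<le> 2" using n0 by simp
    thus False using n2' n22 m2 n2 by simp
  qed
qed

end


lemma nat_mod_eq_int: "((a::nat) mod N = b mod N) \<longleftrightarrow> int N dvd (int a - int b)"
proof -
  have "a mod N = b mod N \<longleftrightarrow> int (a mod N) = int (b mod N)" by (simp only: of_nat_eq_iff)
  also have "\<dots> \<longleftrightarrow> int a mod int N = int b mod int N" by (simp only: zmod_int)
  also have "\<dots> \<longleftrightarrow> int N dvd int a - int b" by (rule mod_eq_dvd_iff)
  finally show ?thesis .
qed

lemma nat_mod_cancel: "((a::nat) + k) mod N = (b + k) mod N \<Longrightarrow> a mod N = b mod N"
  unfolding nat_mod_eq_int by simp

lemma nat_mod_fix: "((a::nat) + k) mod N = a mod N \<Longrightarrow> N dvd k"
proof -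
  assume "(a + k) mod N = a mod N"
  hence "int N dvd int (a + k) - int a" unfolding nat_mod_eq_int .
  hence "int N dvd int k" by simp
  thus ?thesis by (simp only: of_nat_dvd_iff)
qed

definition cadj :: "nat \<Rightarrow> int set \<Rightarrow> nat \<Rightarrow> nat \<Rightarrow> bool" where
  "cadj N S i j \<longleftrightarrow> (\<exists>s\<in>S. (int i - int j) mod int N = s mod int N
                    \<or> (int i - int j) mod int N = (- s) mod int N)"

lemma shift_diff: "(int ((i + k) mod N) - int ((j + k) mod N)) mod int N = (int i - int j) mod int N"
proof -
  have "(int ((i + k) mod N) - int ((j + k) mod N)) mod int N
      = (int (i + k) mod int N - int (j + k) mod int N) mod int N" by (simp only: zmod_int)
  also have "\<dots> = (int (i + k) - int (j + k)) mod int N" by (rule mod_diff_eq)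
  also have "int (i + k) - int (j + k) = int i - int j" by simp
  finally show ?thesis .
qed

lemma cadj_shift: "cadj N S ((i + k) mod N) ((j + k) mod N) = cadj N S i j"
  unfolding cadj_def shift_diff ..

lemma build:
  fixes f :: "nat \<times> nat \<Rightarrow> nat"
  assumes m2: "m \<ge> 2" and n2: "n \<ge> 2"
    and bij: "bij_betw f ({0..<m} \<times> {0..<n}) {0..<N}"
    and N1: "N \<ge> 1"
    and pres: "\<And>x y. x \<in> {0..<m} \<times> {0..<n} \<Longrightarrow> y \<in> {0..<m} \<times> {0..<n} \<Longrightarrow>
                  adjT x y = cadj N S (f x) (f y)"
  shows "circ m n (\<lambda>k x. inv_into ({0..<m} \<times> {0..<n}) f ((f x + k) mod N)) N"
proof -
  interpret rook m n using m2 n2 by unfold_locales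
  define V0 where "V0 = {0..<m} \<times> {0..<n}"
  have VV: "V = V0" unfolding V_def V0_def ..
  define g where "g = inv_into V0 f"
  define \<tau> where "\<tau> = (\<lambda>k x. g ((f x + k) mod N))"
  have bij0: "bij_betw f V0 {0..<N}" using bij unfolding V0_def .
  have fV: "\<And>x. x \<in> V0 \<Longrightarrow> f x < N" using bij0 by (auto dest: bij_betwE)
  have fg: "\<And>z. z < N \<Longrightarrow> f (g z) = z" unfolding g_def using bij_betw_inv_into_right[OF bij0] by simp
  have gf: "\<And>x. x \<in> V0 \<Longrightarrow> g (f x) = x" unfolding g_def using bij_betw_inv_into_left[OF bij0] by simp
  have gV: "\<And>z. z < N \<Longrightarrow> g z \<in> V0" unfolding g_def using bij_betw_inv_into[OF bij0]
    by (auto dest: bij_betwE)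
  have injf: "inj_on f V0" using bij0 by (rule bij_betw_imp_inj_on)
  have Npos: "0 < N" using N1 by simp
  have tV: "\<And>k x. \<tau> k x \<in> V0" unfolding \<tau>_def using gV Npos by simp
  have ft: "\<And>k x. f (\<tau> k x) = (f x + k) mod N" unfolding \<tau>_def using fg Npos by simp
  have cardV: "card V0 = N" using bij_betw_same_card[OF bij0] by simp
  have cardV': "card V0 = m * n" unfolding V0_def by (simp add: card_cartesian_product)
  have aut: "aut (\<tau> k)" for k
  proof -
    have inj: "inj_on (\<tau> k) V0"
    proof (rule inj_onI)
      fix x y assume xy: "x \<in> V0" "y \<in> V0" "\<tau> k x = \<tau> k y"
      hence "(f x + k) mod N = (f y + k) mod N" using ft by metis
      hence "f x mod N = f y mod N" by (rule nat_mod_cancel)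
      hence "f x = f y" using fV xy by simp
      thus "x = y" using injf xy inj_on_eq_iff by metis
    qed
    have sub: "\<tau> k ` V0 \<subseteq> V0" using tV by blast
    have fin: "finite V0" unfolding V0_def by simp
    have im: "\<tau> k ` V0 = V0" using endo_inj_surj[OF fin sub inj] .
    have adj: "adjT (\<tau> k x) (\<tau> k y) = adjT x y" if "x \<in> V0" "y \<in> V0" for x y
    proof -
      have "adjT (\<tau> k x) (\<tau> k y) = cadj N S (f (\<tau> k x)) (f (\<tau> k y))"
        using pres[OF tV[unfolded V0_def] tV[unfolded V0_def]] .
      also have "\<dots> = cadj N S (f x) (f y)" unfolding ft by (rule cadj_shift)
      also have "\<dots> = adjT x y" using pres that unfolding V0_def by simp
      finally show ?thesis .
    qed
    show ?thesis unfolding aut_def VV using inj im adj by blast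
  qed
  have addt: "\<tau> (a + b) x = \<tau> a (\<tau> b x)" for a b x
  proof -
    have "(f (\<tau> b x) + a) mod N = ((f x + b) mod N + a) mod N" by (simp only: ft)
    also have "\<dots> = (f x + b + a) mod N" by (rule mod_add_left_eq)
    also have "f x + b + a = f x + (a + b)" by simp
    finally show ?thesis unfolding \<tau>_def by simp
  qed
  have zerot: "\<tau> 0 x = x" if "x \<in> V0" for x
    unfolding \<tau>_def using gf[OF that] fV[OF that] by simp
  have fixt: "N dvd k" if "x \<in> V0" "\<tau> k x = x" for k x
  proof -
    have "(f x + k) mod N = f x" using ft[of k x] that(2) by simp
    also have "\<dots> = f x mod N" using fV[OF that(1)] by simp
    finally show ?thesis by (rule nat_mod_fix)
  qed
  show ?thesis
    unfolding \<tau>_def[symmetric] g_def[symmetric] V0_def[symmetric]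
    apply unfold_locales
    using aut addt zerot fixt cardV cardV' unfolding VV by auto
qed

theorem theorem2:
  fixes m n :: nat
  assumes "m \<ge> 1" and "n \<ge> 1" and "gcd m n > 1" and "\<not> (m = 2 \<and> n = 2)"
  shows "\<not> is_circulant (tensor_product (complete_graph m) (complete_graph n))"
proof
  assume "is_circulant (tensor_product (complete_graph m) (complete_graph n))"
  then obtain N S f where N1: "N \<ge> 1"
    and bij': "bij_betw f (verts (tensor_product (complete_graph m) (complete_graph n))) (verts (circulant_graph N S))"
    and pr': "\<forall>x\<in>verts (tensor_product (complete_graph m) (complete_graph n)).
        \<forall>y\<in>verts (tensor_product (complete_graph m) (complete_graph n)).
        adj (tensor_product (complete_graph m) (complete_graph n)) x y
        = adj (circulant_graph N S) (f x) (f y)"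
    unfolding is_circulant_def graph_iso_def by blast
  have vT: "verts (tensor_product (complete_graph m) (complete_graph n)) = {0..<m} \<times> {0..<n}"
    by (simp add: tensor_product_def complete_graph_def)
  have vC: "verts (circulant_graph N S) = {0..<N}" by (simp add: circulant_graph_def)
  have bij: "bij_betw f ({0..<m} \<times> {0..<n}) {0..<N}" using bij' unfolding vT vC .
  have pr: "\<forall>x\<in>{0..<m} \<times> {0..<n}. \<forall>y\<in>{0..<m} \<times> {0..<n}.
        adj (tensor_product (complete_graph m) (complete_graph n)) x y
        = adj (circulant_graph N S) (f x) (f y)" using pr' unfolding vT .
  have m2: "m \<ge> 2"
  proof (rule ccontr)
    assume "\<not> m \<ge> 2" hence "m = 1" using assms(1) by simp
    thus False using assms(3) by simp
  qed
  have n2: "n \<ge> 2"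
  proof (rule ccontr)
    assume "\<not> n \<ge> 2" hence "n = 1" using assms(2) by simp
    thus False using assms(3) by simp
  qed
  have fV: "\<And>x. x \<in> {0..<m} \<times> {0..<n} \<Longrightarrow> f x < N" using bij by (auto dest: bij_betwE)
  have pres: "adjT x y = cadj N S (f x) (f y)"
    if "x \<in> {0..<m} \<times> {0..<n}" "y \<in> {0..<m} \<times> {0..<n}" for x y
  proof -
    have "adj (tensor_product (complete_graph m) (complete_graph n)) x y = adjT x y"
      using that unfolding tensor_product_def complete_graph_def adjT_def
      by (cases x, cases y) auto
    moreover have "adj (circulant_graph N S) (f x) (f y) = cadj N S (f x) (f y)"
      using fV[OF that(1)] fV[OF that(2)] unfolding circulant_graph_def cadj_def by simp
    ultimately show ?thesis using pr that by simp
  qed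
  interpret circ m n "\<lambda>k x. inv_into ({0..<m} \<times> {0..<n}) f ((f x + k) mod N)" N
    by (rule build[OF m2 n2 bij N1 pres])
  show False using contra assms(3,4) by blast
qed

end
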